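(* Let $\mathcal K$ (UAVs) and $\mathcal I$ (subscribers) be finite sets. Fix $H>0$, $\sigma^2>0$, constants $\omega_{ij}>0$, transmit powers $p_j\ge0$ ($j\in\mathcal K$), subscriber positions $s_i\in\mathbb R^2$, and association indicators $c_{ik}\in\{0,1\}$ with $\sum_k c_{ik}\le 1$. Decision variables are UAV horizontal positions $q_j\in\mathbb R^2$ ($j\in\mathcal K$), reals $\eta_i$, and slack variables $b_{ij}>-H^2$ ($i\in\mathcal I$, $j\in\mathcal K$). With $h_{ij}(q)=\omega_{ij}/(H^2+\|q_j-s_i\|^2)$, consider the non-convex constraint $$\sum_{k}c_{ik}\log_2\Big(1+\frac{p_kh_{ik}(q)}{\sigma^2+\sum_{j\ne k}p_jh_{ij}(q)}\Big)\ge \eta_i. \qquad(\ast)$$ Fix a local point $q^{(r)}=(q^{(r)}_j)_{j\in\mathcal K}$ and define $d^{(r)}_{ij}=H^2+\|q^{(r)}_j-s_i\|^2$, $D^{(r)}_i=\log_2\big(\sigma^2+\sum_{j\in\mathcal K}p_j\omega_{ij}/d^{(r)}_{ij}\big)$, $E^{(r)}_{ij}=\dfrac{p_j\omega_{ij}}{(d^{(r)}_{ij})^2\,2^{D^{(r)}_i}\ln 2}$, and $\tilde\Lambda_{ik}(b)=-\log_2\big(\sigma^2+\sum_{j\ne k}\frac{p_j\omega_{ij}}{H^2+b_{ij}}\big)$. Consider the constraints $$\sum_k c_{ik}\Big(D^{(r)}_i-\sum_{j\in\mathcal K}E^{(r)}_{ij}\big(\|q_j-s_i\|^2-\|q^{(r)}_j-s_i\|^2\big)\Big)+\sum_kc_{ik}\tilde\Lambda_{ik}(b)\ge\eta_i\qquad(\ast\ast)$$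 and, for all $i\in\mathcal I$, $j\in\mathcal K$, $$-\|q^{(r)}_j-s_i\|^2+2(q^{(r)}_j-s_i)^{\mathrm T}(q_j-s_i)\ge b_{ij}.\qquad(\ast\ast\ast)$$ Then the set of $(q,\eta_i,b)$ (with $b_{ij}>-H^2$) satisfying $(\ast\ast)$ and $(\ast\ast\ast)$ is convex, and every such point satisfies $(\ast)$; i.e., $(\ast\ast)$–$(\ast\ast\ast)$ form a convex approximation of $(\ast)$ whose feasible set (projected onto $(q,\eta_i)$) is contained in that of $(\ast)$.
   Context: Setting: one time slot of a multi-UAV downlink where all UAVs fly at altitude $H$, UAV $j$ is at horizontal position $q_j$, subscriber $i$ at $s_i$ on the ground, the line-of-sight channel gain is $h_{ij}=\omega_{ij}/(H^2+\|q_j-s_i\|^2)$, and the left side of $(\ast)$ is subscriber $i$'s achievable rate under interference from the other UAVs. In the paper the slack $b_{ij}$ (written $B_{ij}(t)$) is introduced as a lower bound $b_{ij}\le\|q_j-s_i\|^2$, which $(\ast\ast\ast)$ replaces by its linearization at $q^{(r)}$. *)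

theory Defs
  imports "HOL-Analysis.Analysis"
begin

text \<open>UAV set = finite type 'k, subscriber set = finite type 'i.
  Horizontal positions are in real^2; the UAV placement q is a vector in (real^2)^'k,
  the slacks b form b $ i $ j.\<close>

definition chgain :: "('i \<Rightarrow> 'k \<Rightarrow> real) \<Rightarrow> real \<Rightarrow> ('i \<Rightarrow> real^2) \<Rightarrow> (real^2)^'k \<Rightarrow> 'i \<Rightarrow> 'k \<Rightarrow> real" where
  "chgain \<omega> H s q i j = \<omega> i j / (H\<^sup>2 + (norm (q $ j - s i))\<^sup>2)"

definition rate :: "('i \<Rightarrow> 'k::finite \<Rightarrow> real) \<Rightarrow> real \<Rightarrow> real \<Rightarrow> ('k \<Rightarrow> real) \<Rightarrow> ('i \<Rightarrow> 'k \<Rightarrow> real)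
    \<Rightarrow> ('i \<Rightarrow> real^2) \<Rightarrow> (real^2)^'k \<Rightarrow> 'i \<Rightarrow> real" where
  "rate c H \<sigma>2 p \<omega> s q i =
     (\<Sum>k\<in>UNIV. c i k * log 2 (1 + p k * chgain \<omega> H s q i k /
         (\<sigma>2 + (\<Sum>j\<in>UNIV - {k}. p j * chgain \<omega> H s q i j))))"

definition d_r :: "real \<Rightarrow> ('i \<Rightarrow> real^2) \<Rightarrow> (real^2)^'k \<Rightarrow> 'i \<Rightarrow> 'k \<Rightarrow> real" where
  "d_r H s qr i j = H\<^sup>2 + (norm (qr $ j - s i))\<^sup>2"

definition D_r :: "real \<Rightarrow> real \<Rightarrow> ('k::finite \<Rightarrow> real) \<Rightarrow> ('i \<Rightarrow> 'k \<Rightarrow> real)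
    \<Rightarrow> ('i \<Rightarrow> real^2) \<Rightarrow> (real^2)^'k \<Rightarrow> 'i \<Rightarrow> real" where
  "D_r H \<sigma>2 p \<omega> s qr i = log 2 (\<sigma>2 + (\<Sum>j\<in>UNIV. p j * \<omega> i j / d_r H s qr i j))"

definition E_r :: "real \<Rightarrow> real \<Rightarrow> ('k::finite \<Rightarrow> real) \<Rightarrow> ('i \<Rightarrow> 'k \<Rightarrow> real)
    \<Rightarrow> ('i \<Rightarrow> real^2) \<Rightarrow> (real^2)^'k \<Rightarrow> 'i \<Rightarrow> 'k \<Rightarrow> real" where
  "E_r H \<sigma>2 p \<omega> s qr i j =
     p j * \<omega> i j / ((d_r H s qr i j)\<^sup>2 * 2 powr (D_r H \<sigma>2 p \<omega> s qr i) * ln 2)"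

definition Lambda_t :: "real \<Rightarrow> real \<Rightarrow> ('k::finite \<Rightarrow> real) \<Rightarrow> ('i \<Rightarrow> 'k \<Rightarrow> real)
    \<Rightarrow> real^'k^'i \<Rightarrow> 'i \<Rightarrow> 'k \<Rightarrow> real" where
  "Lambda_t H \<sigma>2 p \<omega> b i k =
     - log 2 (\<sigma>2 + (\<Sum>j\<in>UNIV - {k}. p j * \<omega> i j / (H\<^sup>2 + b $ i $ j)))"

definition feas :: "('i::finite \<Rightarrow> 'k::finite \<Rightarrow> real) \<Rightarrow> real \<Rightarrow> real \<Rightarrow> ('k \<Rightarrow> real)
    \<Rightarrow> ('i \<Rightarrow> 'k \<Rightarrow> real) \<Rightarrow> ('i \<Rightarrow> real^2) \<Rightarrow> (real^2)^'k \<Rightarrow> 'i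
    \<Rightarrow> (((real^2)^'k) \<times> real \<times> (real^'k^'i)) set" where
  "feas c H \<sigma>2 p \<omega> s qr i =
     {(q, \<eta>, b). (\<forall>i' j. b $ i' $ j > - H\<^sup>2)
        \<and> (\<Sum>k\<in>UNIV. c i k * (D_r H \<sigma>2 p \<omega> s qr i
              - (\<Sum>j\<in>UNIV. E_r H \<sigma>2 p \<omega> s qr i j *
                    ((norm (q $ j - s i))\<^sup>2 - (norm (qr $ j - s i))\<^sup>2))))
          + (\<Sum>k\<in>UNIV. c i k * Lambda_t H \<sigma>2 p \<omega> b i k) \<ge> \<eta>
        \<and> (\<forall>i' j. - (norm (qr $ j - s i'))\<^sup>2 + 2 * ((qr $ j - s i') \<bullet> (q $ j - s i')) \<ge> b $ i' $ j)}"

end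

theory Submission
  imports Defs
begin


lemma key:
  fixes J :: "'a set" and a y z :: "'a \<Rightarrow> real" and \<sigma> :: real
  assumes fin: "finite J" and sp: "\<sigma> > 0" and a: "\<And>j. j\<in>J \<Longrightarrow> a j \<ge> 0"
    and y: "\<And>j. j\<in>J \<Longrightarrow> y j > 0" and z: "\<And>j. j\<in>J \<Longrightarrow> z j > 0"
  shows "ln (\<sigma> + (\<Sum>j\<in>J. a j / y j)) \<ge> ln (\<sigma> + (\<Sum>j\<in>J. a j / z j))
     - (\<Sum>j\<in>J. a j * (y j - z j) / (z j)\<^sup>2) / (\<sigma> + (\<Sum>j\<in>J. a j / z j))"
proof -
  define A where "A = (\<Sum>j\<in>J. a j / z j)"
  define B where "B = (\<Sum>j\<in>J. a j / y j)"
  define C where "C = (\<Sum>j\<in>J. a j * y j / (z j)\<^sup>2)"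
  have A0: "A \<ge> 0" unfolding A_def by (auto intro!: sum_nonneg divide_nonneg_pos a z)
  have B0: "B \<ge> 0" unfolding B_def by (auto intro!: sum_nonneg divide_nonneg_pos a y)
  have C0: "C \<ge> 0" unfolding C_def proof (rule sum_nonneg) fix j assume "j \<in> J" then show "0 \<le> a j * y j / (z j)\<^sup>2" using a y z by (simp add: less_imp_le) qed
  have diff: "(\<Sum>j\<in>J. a j * (y j - z j) / (z j)\<^sup>2) = C - A"
    unfolding C_def A_def sum_subtractf[symmetric]
  proof (rule sum.cong)
    fix j assume "j \<in> J" then have "z j > 0" using z by auto
    then show "a j * (y j - z j) / (z j)\<^sup>2 = a j * y j / (z j)\<^sup>2 - a j / z j"
      by (simp add: field_simps power2_eq_square)
  qed simp
  have cs: "A\<^sup>2 \<le> B * C"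
  proof -
    have "(\<Sum>j\<in>J. sqrt (a j / y j) * sqrt (a j * y j / (z j)\<^sup>2))\<^sup>2
       \<le> (\<Sum>j\<in>J. (sqrt (a j / y j))\<^sup>2) * (\<Sum>j\<in>J. (sqrt (a j * y j / (z j)\<^sup>2))\<^sup>2)"
      by (rule Cauchy_Schwarz_ineq_sum)
    moreover have "(\<Sum>j\<in>J. sqrt (a j / y j) * sqrt (a j * y j / (z j)\<^sup>2)) = A"
      unfolding A_def
    proof (rule sum.cong)
      fix j assume j: "j \<in> J"
      have "sqrt (a j / y j) * sqrt (a j * y j / (z j)\<^sup>2) = sqrt ((a j / z j)\<^sup>2)"
        using y[OF j] z[OF j] by (simp add: real_sqrt_mult[symmetric] field_simps power2_eq_square)
      also have "\<dots> = a j / z j" using a[OF j] z[OF j] by simp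
      finally show "sqrt (a j / y j) * sqrt (a j * y j / (z j)\<^sup>2) = a j / z j" .
    qed simp
    moreover have "(\<Sum>j\<in>J. (sqrt (a j / y j))\<^sup>2) = B" unfolding B_def
      by (rule sum.cong) (auto simp: a y less_imp_le zero_le_divide_iff)
    moreover have "(\<Sum>j\<in>J. (sqrt (a j * y j / (z j)\<^sup>2))\<^sup>2) = C" unfolding C_def
      by (rule sum.cong) (auto simp: a y less_imp_le zero_le_divide_iff)
    ultimately show ?thesis by simp
  qed
  have bc: "B + C \<ge> 2 * A"
  proof -
    have "2 * A = (\<Sum>j\<in>J. 2 * (a j / z j))" unfolding A_def by (simp add: sum_distrib_left)
    also have "\<dots> \<le> (\<Sum>j\<in>J. a j / y j + a j * y j / (z j)\<^sup>2)"
    proof (rule sum_mono)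
      fix j assume j: "j \<in> J"
      have "a j / y j + a j * y j / (z j)\<^sup>2 - 2 * (a j / z j) = a j * (z j - y j)\<^sup>2 / (y j * (z j)\<^sup>2)"
        using y[OF j] z[OF j] by (simp add: field_simps power2_eq_square)
      also have "\<dots> \<ge> 0" using a[OF j] y[OF j] z[OF j] by simp
      finally show "2 * (a j / z j) \<le> a j / y j + a j * y j / (z j)\<^sup>2" by simp
    qed
    also have "\<dots> = B + C" unfolding B_def C_def by (simp add: sum.distrib)
    finally show ?thesis .
  qed
  have ld: "ln (\<sigma> + A) - ln (\<sigma> + B) \<le> ((\<sigma> + A) - (\<sigma> + B)) / (\<sigma> + B)"
    using sp A0 B0 by (intro ln_diff_le) auto
  have ineq: "(A - B) / (\<sigma> + B) \<le> (C - A) / (\<sigma> + A)"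
  proof -
    have "(A - B) * (\<sigma> + A) \<le> (C - A) * (\<sigma> + B)"
    proof -
      have "\<sigma> * (2 * A) \<le> \<sigma> * (B + C)" using bc sp by (intro mult_left_mono) auto
      then show ?thesis using cs by (simp add: algebra_simps power2_eq_square)
    qed
    then show ?thesis using sp A0 B0 by (simp add: divide_simps mult.commute)
  qed
  show ?thesis using ld ineq diff unfolding A_def[symmetric] B_def[symmetric] by simp
qed

lemma rate_bound:
  fixes c :: "'i::finite \<Rightarrow> 'k::finite \<Rightarrow> real"
    and H \<sigma>2 :: real and p :: "'k \<Rightarrow> real" and \<omega> :: "'i \<Rightarrow> 'k \<Rightarrow> real"
    and s :: "'i \<Rightarrow> real^2" and qr :: "(real^2)^'k" and i :: 'i
  assumes H: "H > 0" and sg: "\<sigma>2 > 0"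
    and om: "\<And>i j. \<omega> i j > 0"
    and pp: "\<And>j. p j \<ge> 0"
    and cc: "\<And>i k. c i k \<in> {0, 1}"
    and mem: "(q, \<eta>, b) \<in> feas c H \<sigma>2 p \<omega> s qr i"
  shows "rate c H \<sigma>2 p \<omega> s q i \<ge> \<eta>"
proof -
  from mem have bpos: "\<And>i' j. b$i'$j > -H\<^sup>2"
    and main: "(\<Sum>k\<in>UNIV. c i k * (D_r H \<sigma>2 p \<omega> s qr i
              - (\<Sum>j\<in>UNIV. E_r H \<sigma>2 p \<omega> s qr i j *
                    ((norm (q $ j - s i))\<^sup>2 - (norm (qr $ j - s i))\<^sup>2))))
          + (\<Sum>k\<in>UNIV. c i k * Lambda_t H \<sigma>2 p \<omega> b i k) \<ge> \<eta>"
    and lin: "\<And>i' j. - (norm (qr $ j - s i'))\<^sup>2 + 2 * ((qr $ j - s i') \<bullet> (q $ j - s i')) \<ge> b $ i' $ j"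
    unfolding feas_def by auto
  define a where "a j = p j * \<omega> i j" for j
  define n where "n j = (norm (q $ j - s i))\<^sup>2" for j
  define r where "r j = (norm (qr $ j - s i))\<^sup>2" for j
  define Sz where "Sz = \<sigma>2 + (\<Sum>j\<in>UNIV. a j / (H\<^sup>2 + r j))"
  have a0: "\<And>j. a j \<ge> 0" unfolding a_def using pp om by (simp add: less_imp_le)
  have H2: "H\<^sup>2 > 0" using H by simp
  have r0: "\<And>j. r j \<ge> 0" "\<And>j. n j \<ge> 0" unfolding r_def n_def by auto
  have bn: "b$i$j \<le> n j" for j
  proof -
    have "0 \<le> (norm ((q $ j - s i) - (qr $ j - s i)))\<^sup>2" by simp
    also have "\<dots> = n j - 2 * ((qr $ j - s i) \<bullet> (q $ j - s i)) + r j"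
      unfolding n_def r_def by (simp add: power2_norm_eq_inner inner_diff algebra_simps inner_commute)
    finally show ?thesis using lin[of i j] unfolding r_def by simp
  qed
  have Sz: "Sz > 0" unfolding Sz_def using sg a0 r0 H2
    by (intro add_pos_nonneg sum_nonneg) (auto intro!: divide_nonneg_pos add_pos_nonneg)
  have Dr: "D_r H \<sigma>2 p \<omega> s qr i = log 2 Sz"
    unfolding D_r_def d_r_def Sz_def a_def r_def by simp
  have Er: "E_r H \<sigma>2 p \<omega> s qr i j = a j / ((H\<^sup>2 + r j)\<^sup>2 * Sz * ln 2)" for j
    unfolding E_r_def Dr using Sz by (simp add: d_r_def a_def r_def)
  define X where "X = D_r H \<sigma>2 p \<omega> s qr i - (\<Sum>j\<in>UNIV. E_r H \<sigma>2 p \<omega> s qr i j * (n j - r j))"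
  have lower: "log 2 (\<sigma>2 + (\<Sum>j\<in>UNIV. a j / (H\<^sup>2 + n j))) \<ge> X"
  proof -
    have k: "ln (\<sigma>2 + (\<Sum>j\<in>UNIV. a j / (H\<^sup>2 + n j))) \<ge> ln Sz
       - (\<Sum>j\<in>UNIV. a j * ((H\<^sup>2 + n j) - (H\<^sup>2 + r j)) / (H\<^sup>2 + r j)\<^sup>2) / Sz"
      unfolding Sz_def using sg a0 r0 H2
      by (intro key) (auto intro!: add_pos_nonneg)
    have "(\<Sum>j\<in>UNIV. E_r H \<sigma>2 p \<omega> s qr i j * (n j - r j))
       = (\<Sum>j\<in>UNIV. a j * ((H\<^sup>2 + n j) - (H\<^sup>2 + r j)) / (H\<^sup>2 + r j)\<^sup>2) / Sz / ln 2"
      unfolding Er sum_divide_distrib by (rule sum.cong) (auto simp: field_simps)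
    then have "X = (ln Sz - (\<Sum>j\<in>UNIV. a j * ((H\<^sup>2 + n j) - (H\<^sup>2 + r j)) / (H\<^sup>2 + r j)\<^sup>2) / Sz) / ln 2"
      unfolding X_def Dr log_def by (simp add: diff_divide_distrib)
    also have "\<dots> \<le> ln (\<sigma>2 + (\<Sum>j\<in>UNIV. a j / (H\<^sup>2 + n j))) / ln 2"
      using k by (intro divide_right_mono) auto
    finally show ?thesis by (simp add: log_def)
  qed
  have per_k: "log 2 (1 + p k * chgain \<omega> H s q i k / (\<sigma>2 + (\<Sum>j\<in>UNIV-{k}. p j * chgain \<omega> H s q i j)))
      \<ge> X + Lambda_t H \<sigma>2 p \<omega> b i k" for k
  proof -
    have ch: "\<And>j. p j * chgain \<omega> H s q i j = a j / (H\<^sup>2 + n j)"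
      unfolding chgain_def a_def n_def by simp
    define Tk where "Tk = \<sigma>2 + (\<Sum>j\<in>UNIV-{k}. a j / (H\<^sup>2 + n j))"
    define T where "T = \<sigma>2 + (\<Sum>j\<in>UNIV. a j / (H\<^sup>2 + n j))"
    define Sb where "Sb = \<sigma>2 + (\<Sum>j\<in>UNIV-{k}. a j / (H\<^sup>2 + b$i$j))"
    have Tk0: "Tk > 0" unfolding Tk_def using sg a0 r0 H2
      by (intro add_pos_nonneg sum_nonneg) (auto intro!: divide_nonneg_pos add_pos_nonneg)
    have TT: "T = Tk + a k / (H\<^sup>2 + n k)"
      unfolding T_def Tk_def by (simp add: sum.remove[of UNIV k])
    have ak: "a k / (H\<^sup>2 + n k) \<ge> 0" using a0 r0 H2 by (auto intro!: divide_nonneg_pos add_pos_nonneg)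
    have T0: "T > 0" using TT Tk0 ak by simp
    have "1 + a k / (H\<^sup>2 + n k) / Tk = T / Tk" proof -
      have "H\<^sup>2 + n k > 0" using H2 r0(2)[of k] by linarith
      have "(Tk + x) / Tk = 1 + x / Tk" for x using Tk0 by (simp add: add_divide_distrib)
      then show ?thesis using TT by simp
    qed
    then have eq: "log 2 (1 + p k * chgain \<omega> H s q i k / (\<sigma>2 + (\<Sum>j\<in>UNIV-{k}. p j * chgain \<omega> H s q i j)))
        = log 2 T - log 2 Tk"
      unfolding ch Tk_def[symmetric] using T0 Tk0 by (simp add: log_divide)
    have "Tk \<le> Sb" unfolding Tk_def Sb_def
    proof (intro add_left_mono sum_mono)
      fix j assume "j \<in> UNIV - {k}"
      have "0 < H\<^sup>2 + b$i$j" using bpos[of i j] by simp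
      then show "a j / (H\<^sup>2 + n j) \<le> a j / (H\<^sup>2 + b$i$j)"
        using bn[of j] a0[of j] by (intro divide_left_mono) (auto intro!: mult_pos_pos)
    qed
    then have "log 2 Tk \<le> log 2 Sb" using Tk0 by simp
    moreover have "Lambda_t H \<sigma>2 p \<omega> b i k = - log 2 Sb"
      unfolding Lambda_t_def Sb_def a_def by simp
    ultimately show ?thesis using eq lower unfolding T_def by simp
  qed
  have c0: "\<And>k. c i k \<ge> 0" using cc by (metis empty_iff insert_iff order_refl zero_le_one)
  have "\<eta> \<le> (\<Sum>k\<in>UNIV. c i k * X) + (\<Sum>k\<in>UNIV. c i k * Lambda_t H \<sigma>2 p \<omega> b i k)"
    using main unfolding X_def n_def r_def by simp
  also have "\<dots> = (\<Sum>k\<in>UNIV. c i k * (X + Lambda_t H \<sigma>2 p \<omega> b i k))"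
    by (simp add: distrib_left sum.distrib)
  also have "\<dots> \<le> rate c H \<sigma>2 p \<omega> s q i"
    unfolding rate_def by (intro sum_mono mult_left_mono per_k c0)
  finally show ?thesis .
qed

lemma lnconv:
  fixes J :: "'a set" and a y1 y2 :: "'a \<Rightarrow> real" and \<sigma> u v :: real
  assumes fin: "finite J" and sp: "\<sigma> > 0" and a: "\<And>j. j\<in>J \<Longrightarrow> a j \<ge> 0"
    and y1: "\<And>j. j\<in>J \<Longrightarrow> y1 j > 0" and y2: "\<And>j. j\<in>J \<Longrightarrow> y2 j > 0"
    and u: "u \<ge> 0" and v: "v \<ge> 0" and uv: "u + v = 1"
  shows "ln (\<sigma> + (\<Sum>j\<in>J. a j / (u * y1 j + v * y2 j)))
     \<le> u * ln (\<sigma> + (\<Sum>j\<in>J. a j / y1 j)) + v * ln (\<sigma> + (\<Sum>j\<in>J. a j / y2 j))"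
proof -
  define z where "z j = u * y1 j + v * y2 j" for j
  have z: "z j > 0" if "j \<in> J" for j
  proof (cases "u > 0")
    case True
    then show ?thesis unfolding z_def using y1[OF that] y2[OF that] v
      by (intro add_pos_nonneg mult_pos_pos) auto
  next
    case False
    then have "u = 0" "v = 1" using u uv by auto
    then show ?thesis unfolding z_def using y2[OF that] by simp
  qed
  define S where "S = \<sigma> + (\<Sum>j\<in>J. a j / z j)"
  define L where "L w = (\<Sum>j\<in>J. a j * (w j - z j) / (z j)\<^sup>2)" for w
  have k1: "ln (\<sigma> + (\<Sum>j\<in>J. a j / y1 j)) \<ge> ln S - L y1 / S"
    unfolding S_def L_def by (rule key[OF fin sp a y1 z])
  have k2: "ln (\<sigma> + (\<Sum>j\<in>J. a j / y2 j)) \<ge> ln S - L y2 / S"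
    unfolding S_def L_def by (rule key[OF fin sp a y2 z])
  have L0: "u * L y1 + v * L y2 = 0"
  proof -
    have "u * L y1 + v * L y2 = (\<Sum>j\<in>J. a j * (u * y1 j + v * y2 j - (u + v) * z j) / (z j)\<^sup>2)"
      unfolding L_def sum_distrib_left sum.distrib[symmetric]
      by (rule sum.cong) (auto simp: algebra_simps diff_divide_distrib add_divide_distrib)
    also have "\<dots> = 0" unfolding uv z_def by simp
    finally show ?thesis .
  qed
  have "u * (ln S - L y1 / S) + v * (ln S - L y2 / S) = ln S - (u * L y1 + v * L y2) / S"
    using uv by (simp add: algebra_simps add_divide_distrib[symmetric]) (metis distrib_right mult_1)
  also have "\<dots> = ln S" using L0 by simp
  finally have "ln S = u * (ln S - L y1 / S) + v * (ln S - L y2 / S)" by simp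
  also have "\<dots> \<le> u * ln (\<sigma> + (\<Sum>j\<in>J. a j / y1 j)) + v * ln (\<sigma> + (\<Sum>j\<in>J. a j / y2 j))"
    using k1 k2 u v by (intro add_mono mult_left_mono) auto
  finally show ?thesis unfolding S_def z_def .
qed

lemma sum_concave:
  fixes f g h :: "'a \<Rightarrow> real"
  assumes "\<And>k. k \<in> K \<Longrightarrow> u * f k + v * g k \<le> h k"
  shows "u * sum f K + v * sum g K \<le> sum h K"
proof -
  have "u * sum f K + v * sum g K = (\<Sum>k\<in>K. u * f k + v * g k)"
    by (simp add: sum_distrib_left sum.distrib)
  also have "\<dots> \<le> sum h K" using assms by (rule sum_mono)
  finally show ?thesis .
qed

lemma sum_convex:
  fixes f g h :: "'a \<Rightarrow> real"
  assumes "\<And>k. k \<in> K \<Longrightarrow> h k \<le> u * f k + v * g k"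
  shows "sum h K \<le> u * sum f K + v * sum g K"
proof -
  have "u * sum f K + v * sum g K = (\<Sum>k\<in>K. u * f k + v * g k)"
    by (simp add: sum_distrib_left sum.distrib)
  moreover have "sum h K \<le> (\<Sum>k\<in>K. u * f k + v * g k)" using assms by (rule sum_mono)
  ultimately show ?thesis by simp
qed

lemma strict_comb:
  fixes x y w u v :: real
  assumes "x > w" "y > w" "u \<ge> 0" "v \<ge> 0" "u + v = 1"
  shows "u * x + v * y > w"
proof (cases "u > 0")
  case True
  have "u * (x - w) > 0" using True assms by simp
  moreover have "v * (y - w) \<ge> 0" using assms by simp
  ultimately have "u * (x - w) + v * (y - w) > 0" by linarith
  then show ?thesis using assms(5) by (simp add: algebra_simps) (metis add.commute mult.commute mult_1 distrib_right)
next
  case False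
  then have "u = 0" "v = 1" using assms by auto
  then show ?thesis using assms by simp
qed

lemma comb_sub:
  fixes q q' :: "(real^2)^'k" and s :: "real^2" and u v :: real
  assumes "u + v = 1"
  shows "(u *\<^sub>R q + v *\<^sub>R q') $ j - s = u *\<^sub>R (q $ j - s) + v *\<^sub>R (q' $ j - s)"
proof -
  have "s = (u + v) *\<^sub>R s" using assms by simp
  then have "s = u *\<^sub>R s + v *\<^sub>R s" by (simp add: scaleR_add_left)
  then show ?thesis by (simp add: algebra_simps)
qed

lemma normsq_convex:
  fixes x y :: "'a::real_normed_vector" and u v :: real
  assumes u: "u \<ge> 0" and v: "v \<ge> 0" and uv: "u + v = 1"
  shows "(norm (u *\<^sub>R x + v *\<^sub>R y))\<^sup>2 \<le> u * (norm x)\<^sup>2 + v * (norm y)\<^sup>2"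
proof -
  have "norm (u *\<^sub>R x + v *\<^sub>R y) \<le> u * norm x + v * norm y"
    using norm_triangle_ineq[of "u *\<^sub>R x" "v *\<^sub>R y"] u v by simp
  then have "(norm (u *\<^sub>R x + v *\<^sub>R y))\<^sup>2 \<le> (u * norm x + v * norm y)\<^sup>2"
    by (intro power_mono) auto
  also have "\<dots> = u * (norm x)\<^sup>2 + v * (norm y)\<^sup>2 - u * v * (norm x - norm y)\<^sup>2"
  proof -
    have "v = 1 - u" using uv by simp
    then show ?thesis by (simp add: \<open>v = 1 - u\<close> power2_eq_square algebra_simps)
  qed
  also have "\<dots> \<le> u * (norm x)\<^sup>2 + v * (norm y)\<^sup>2" using u v by simp
  finally show ?thesis .
qed

lemma lam_concave:
  fixes H \<sigma>2 :: real and p :: "'k::finite \<Rightarrow> real" and \<omega> :: "'i::finite \<Rightarrow> 'k \<Rightarrow> real"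
    and b b' :: "real^'k^'i" and u v :: real
  assumes sg: "\<sigma>2 > 0" and om: "\<And>i j. \<omega> i j > 0" and pp: "\<And>j. p j \<ge> 0"
    and b1: "\<And>j. b $ i $ j > - H\<^sup>2" and b2: "\<And>j. b' $ i $ j > - H\<^sup>2"
    and u: "u \<ge> 0" and v: "v \<ge> 0" and uv: "u + v = 1"
  shows "u * Lambda_t H \<sigma>2 p \<omega> b i k + v * Lambda_t H \<sigma>2 p \<omega> b' i k
      \<le> Lambda_t H \<sigma>2 p \<omega> (u *\<^sub>R b + v *\<^sub>R b') i k"
proof -
  have e: "H\<^sup>2 + (u * x + v * y) = u * (H\<^sup>2 + x) + v * (H\<^sup>2 + y)" for x y
  proof -
    have "u * (H\<^sup>2 + x) + v * (H\<^sup>2 + y) = (u + v) * H\<^sup>2 + (u * x + v * y)" by (simp add: algebra_simps)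
    then show ?thesis using uv by simp
  qed
  define S1 where "S1 = \<sigma>2 + (\<Sum>j\<in>UNIV-{k}. p j * \<omega> i j / (H\<^sup>2 + b $ i $ j))"
  define S2 where "S2 = \<sigma>2 + (\<Sum>j\<in>UNIV-{k}. p j * \<omega> i j / (H\<^sup>2 + b' $ i $ j))"
  define SB where "SB = \<sigma>2 + (\<Sum>j\<in>UNIV-{k}. p j * \<omega> i j / (H\<^sup>2 + (u *\<^sub>R b + v *\<^sub>R b') $ i $ j))"
  have "SB = \<sigma>2 + (\<Sum>j\<in>UNIV-{k}. p j * \<omega> i j / (u * (H\<^sup>2 + b $ i $ j) + v * (H\<^sup>2 + b' $ i $ j)))"
    unfolding SB_def by (simp add: e)
  also have "ln \<dots> \<le> u * ln S1 + v * ln S2" unfolding S1_def S2_def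
  proof (rule lnconv)
    show "\<And>j. 0 \<le> p j * \<omega> i j" using pp om by (simp add: less_imp_le)
    show "\<And>j. 0 < H\<^sup>2 + b $ i $ j" using b1 by (metis add.commute neg_less_iff_less diff_minus_eq_add diff_gt_0_iff_gt)
    show "\<And>j. 0 < H\<^sup>2 + b' $ i $ j" using b2 by (metis add.commute neg_less_iff_less diff_minus_eq_add diff_gt_0_iff_gt)
  qed (use sg u v uv in auto)
  finally have l: "ln SB \<le> u * ln S1 + v * ln S2" .
  have "ln SB / ln 2 \<le> (u * ln S1 + v * ln S2) / ln 2" using l by (intro divide_right_mono) auto
  then show ?thesis unfolding Lambda_t_def log_def S1_def[symmetric] S2_def[symmetric] SB_def[symmetric]
    by (simp add: add_divide_distrib)
qed

lemma feas_convex: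
  fixes c :: "'i::finite \<Rightarrow> 'k::finite \<Rightarrow> real"
    and H \<sigma>2 :: real and p :: "'k \<Rightarrow> real" and \<omega> :: "'i \<Rightarrow> 'k \<Rightarrow> real"
    and s :: "'i \<Rightarrow> real^2" and qr :: "(real^2)^'k" and i :: 'i
  assumes H: "H > 0" and sg: "\<sigma>2 > 0"
    and om: "\<And>i j. \<omega> i j > 0"
    and pp: "\<And>j. p j \<ge> 0"
    and cc: "\<And>i k. c i k \<in> {0, 1}"
  shows "convex (feas c H \<sigma>2 p \<omega> s qr i)"
proof (rule convexI)
  fix x y and u v :: real
  assume x: "x \<in> feas c H \<sigma>2 p \<omega> s qr i" and y: "y \<in> feas c H \<sigma>2 p \<omega> s qr i"
    and u: "0 \<le> u" and v: "0 \<le> v" and uv: "u + v = 1"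
  obtain q \<eta> b where xe: "x = (q, \<eta>, b)" by (metis prod_cases3)
  obtain q' \<eta>' b' where ye: "y = (q', \<eta>', b')" by (metis prod_cases3)
  define Q where "Q = u *\<^sub>R q + v *\<^sub>R q'"
  define B where "B = u *\<^sub>R b + v *\<^sub>R b'"
  have sx: "u *\<^sub>R x + v *\<^sub>R y = (Q, u * \<eta> + v * \<eta>', B)" unfolding xe ye Q_def B_def by simp
  define F where "F w = (\<Sum>k\<in>UNIV. c i k * (D_r H \<sigma>2 p \<omega> s qr i
              - (\<Sum>j\<in>UNIV. E_r H \<sigma>2 p \<omega> s qr i j *
                    ((norm (w $ j - s i))\<^sup>2 - (norm (qr $ j - s i))\<^sup>2))))" for w
  define Lam where "Lam bb = (\<Sum>k\<in>UNIV. c i k * Lambda_t H \<sigma>2 p \<omega> bb i k)" for bb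
  from x have bpos1: "\<And>i' j. b$i'$j > -H\<^sup>2" and main1: "F q + Lam b \<ge> \<eta>"
    and lin1: "\<And>i' j. - (norm (qr $ j - s i'))\<^sup>2 + 2 * ((qr $ j - s i') \<bullet> (q $ j - s i')) \<ge> b $ i' $ j"
    unfolding feas_def xe F_def Lam_def by auto
  from y have bpos2: "\<And>i' j. b'$i'$j > -H\<^sup>2" and main2: "F q' + Lam b' \<ge> \<eta>'"
    and lin2: "\<And>i' j. - (norm (qr $ j - s i'))\<^sup>2 + 2 * ((qr $ j - s i') \<bullet> (q' $ j - s i')) \<ge> b' $ i' $ j"
    unfolding feas_def ye F_def Lam_def by auto
  have Bc: "B $ i' $ j = u * b$i'$j + v * b'$i'$j" for i' j unfolding B_def by simp
  have Qc: "Q $ j - s i' = u *\<^sub>R (q$j - s i') + v *\<^sub>R (q'$j - s i')" for j i'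
    unfolding Q_def by (rule comb_sub[OF uv])
  have C1: "B $ i' $ j > -H\<^sup>2" for i' j
    unfolding Bc using strict_comb[OF bpos1 bpos2 u v uv] .
  have C3: "- (norm (qr $ j - s i'))\<^sup>2 + 2 * ((qr $ j - s i') \<bullet> (Q $ j - s i')) \<ge> B $ i' $ j" for i' j
  proof -
    define \<alpha> where "\<alpha> = - (norm (qr $ j - s i'))\<^sup>2"
    define w where "w = qr $ j - s i'"
    have a: "\<alpha> = u * \<alpha> + v * \<alpha>" using uv by (metis distrib_right mult_1)
    have "\<alpha> + 2 * (w \<bullet> (Q $ j - s i')) = u * (\<alpha> + 2 * (w \<bullet> (q $ j - s i'))) + v * (\<alpha> + 2 * (w \<bullet> (q' $ j - s i')))"
      unfolding Qc inner_add_right inner_scaleR_right by (subst a) (simp add: algebra_simps)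
    also have "\<dots> \<ge> u * b$i'$j + v * b'$i'$j"
      using lin1[of i' j] lin2[of i' j] u v unfolding \<alpha>_def w_def by (intro add_mono mult_left_mono) auto
    finally show ?thesis unfolding Bc \<alpha>_def w_def by simp
  qed
  have c0: "\<And>k. c i k \<ge> 0" using cc by (metis empty_iff insert_iff order_refl zero_le_one)
  have FQ: "u * F q + v * F q' \<le> F Q" unfolding F_def
  proof (rule sum_concave)
    fix k :: 'k
    define D where "D = D_r H \<sigma>2 p \<omega> s qr i"
    define Y where "Y w = (\<Sum>j\<in>UNIV. E_r H \<sigma>2 p \<omega> s qr i j *
                    ((norm (w $ j - s i))\<^sup>2 - (norm (qr $ j - s i))\<^sup>2))" for w
    have E0: "E_r H \<sigma>2 p \<omega> s qr i j \<ge> 0" for j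
      unfolding E_r_def using pp[of j] om[of i j]
      by (intro divide_nonneg_nonneg mult_nonneg_nonneg) auto
    have YQ: "Y Q \<le> u * Y q + v * Y q'" unfolding Y_def
    proof (rule sum_convex)
      fix j :: 'k
      define r where "r = (norm (qr $ j - s i))\<^sup>2"
      have "(norm (Q $ j - s i))\<^sup>2 \<le> u * (norm (q $ j - s i))\<^sup>2 + v * (norm (q' $ j - s i))\<^sup>2"
        unfolding Qc by (rule normsq_convex[OF u v uv])
      moreover have "r = u * r + v * r" using uv by (metis distrib_right mult_1)
      ultimately have "(norm (Q $ j - s i))\<^sup>2 - r \<le> u * ((norm (q $ j - s i))\<^sup>2 - r) + v * ((norm (q' $ j - s i))\<^sup>2 - r)"
        by (simp add: algebra_simps)
      then have "E_r H \<sigma>2 p \<omega> s qr i j * ((norm (Q $ j - s i))\<^sup>2 - r)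
          \<le> E_r H \<sigma>2 p \<omega> s qr i j * (u * ((norm (q $ j - s i))\<^sup>2 - r) + v * ((norm (q' $ j - s i))\<^sup>2 - r))"
        using E0 by (intro mult_left_mono) auto
      then show "E_r H \<sigma>2 p \<omega> s qr i j * ((norm (Q $ j - s i))\<^sup>2 - r)
          \<le> u * (E_r H \<sigma>2 p \<omega> s qr i j * ((norm (q $ j - s i))\<^sup>2 - r)) + v * (E_r H \<sigma>2 p \<omega> s qr i j * ((norm (q' $ j - s i))\<^sup>2 - r))"
        by (simp add: algebra_simps)
    qed
    have dd: "D = u * D + v * D" using uv by (metis distrib_right mult_1)
    have "u * (D - Y q) + v * (D - Y q') \<le> D - Y Q"
      using YQ by (subst (3) dd) (simp add: algebra_simps)
    then have "c i k * (u * (D - Y q) + v * (D - Y q')) \<le> c i k * (D - Y Q)"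
      using c0 by (intro mult_left_mono) auto
    then show "u * (c i k * (D - Y q)) + v * (c i k * (D - Y q')) \<le> c i k * (D - Y Q)"
      by (simp add: algebra_simps)
  qed
  have LB: "u * Lam b + v * Lam b' \<le> Lam B" unfolding Lam_def
  proof (rule sum_concave)
    fix k :: 'k
    have "u * Lambda_t H \<sigma>2 p \<omega> b i k + v * Lambda_t H \<sigma>2 p \<omega> b' i k \<le> Lambda_t H \<sigma>2 p \<omega> B i k"
      unfolding B_def using sg om pp bpos1 bpos2 u v uv by (rule lam_concave)
    then have "c i k * (u * Lambda_t H \<sigma>2 p \<omega> b i k + v * Lambda_t H \<sigma>2 p \<omega> b' i k) \<le> c i k * Lambda_t H \<sigma>2 p \<omega> B i k"
      using c0 by (intro mult_left_mono) auto
    then show "u * (c i k * Lambda_t H \<sigma>2 p \<omega> b i k) + v * (c i k * Lambda_t H \<sigma>2 p \<omega> b' i k) \<le> c i k * Lambda_t H \<sigma>2 p \<omega> B i k"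
      by (simp add: algebra_simps)
  qed
  have C2: "u * \<eta> + v * \<eta>' \<le> F Q + Lam B"
  proof -
    have "u * \<eta> + v * \<eta>' \<le> u * (F q + Lam b) + v * (F q' + Lam b')"
      using main1 main2 u v by (intro add_mono mult_left_mono) auto
    also have "\<dots> = (u * F q + v * F q') + (u * Lam b + v * Lam b')" by (simp add: algebra_simps)
    also have "\<dots> \<le> F Q + Lam B" using FQ LB by simp
    finally show ?thesis .
  qed
  show "u *\<^sub>R x + v *\<^sub>R y \<in> feas c H \<sigma>2 p \<omega> s qr i"
    unfolding sx feas_def using C1 C2 C3 unfolding F_def Lam_def by auto
qed

theorem proposition2:
  fixes c :: "'i::finite \<Rightarrow> 'k::finite \<Rightarrow> real"
    and H \<sigma>2 :: real and p :: "'k \<Rightarrow> real" and \<omega> :: "'i \<Rightarrow> 'k \<Rightarrow> real"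
    and s :: "'i \<Rightarrow> real^2" and qr :: "(real^2)^'k" and i :: 'i
  assumes "H > 0" and "\<sigma>2 > 0"
    and "\<And>i j. \<omega> i j > 0"
    and "\<And>j. p j \<ge> 0"
    and "\<And>i k. c i k \<in> {0, 1}"
    and "\<And>i. (\<Sum>k\<in>UNIV. c i k) \<le> 1"
  shows "convex (feas c H \<sigma>2 p \<omega> s qr i)
    \<and> (\<forall>(q, \<eta>, b) \<in> feas c H \<sigma>2 p \<omega> s qr i. rate c H \<sigma>2 p \<omega> s q i \<ge> \<eta>)"
proof
  show "convex (feas c H \<sigma>2 p \<omega> s qr i)"
    using assms(1-5) by (rule feas_convex)
  show "\<forall>(q, \<eta>, b) \<in> feas c H \<sigma>2 p \<omega> s qr i. rate c H \<sigma>2 p \<omega> s q i \<ge> \<eta>"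
  proof (intro ballI, clarify)
    fix q \<eta> b assume "(q, \<eta>, b) \<in> feas c H \<sigma>2 p \<omega> s qr i"
    then show "rate c H \<sigma>2 p \<omega> s q i \<ge> \<eta>" using assms(1-5) by (intro rate_bound) auto
  qed
qed

end
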